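(* Let $p_\theta$ be a language model over $\Sigma$ depending differentiably on $\theta\in\mathbb{R}^d$ and $q$ a fixed language model over $\Sigma$ with $\mathrm{KL}(p_\theta\|q)<\infty$. Let $Y^{(1)},\dots,Y^{(M)}$ be i.i.d. samples from $p_\theta$ with eos-padded versions $\bar Y^{(m)}$. Define $$\widehat{\nabla}_{\mathrm{MC}}^{\le N}=\sum_{n=1}^N\frac1M\sum_{m=1}^M\log\frac{\overrightarrow{p}_\theta(\bar Y^{(m)}_n\mid\bar Y^{(m)}_{<n})}{\overrightarrow{q}(\bar Y^{(m)}_n\mid\bar Y^{(m)}_{<n})}\,\nabla_\theta\log\overrightarrow{p}_\theta(\bar Y^{(m)}_{\le N})$$ and $\widehat{\nabla}_{\mathrm{MC}}=\frac1M\sum_{m=1}^M\log\frac{p_\theta(Y^{(m)})}{q(Y^{(m)})}\nabla_\theta\log p_\theta(Y^{(m)})$. Then $\lim_{N\to\infty}\widehat{\nabla}_{\mathrm{MC}}^{\le N}=\widehat{\nabla}_{\mathrm{MC}}$.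
   Context: $\Sigma$ is a finite non-empty alphabet, $\mathrm{eos}\notin\Sigma$, $\bar\Sigma=\Sigma\cup\{\mathrm{eos}\}$. A language model $p$ is a distribution over $\Sigma^*$; $\overrightarrow{p}(x)=\sum_{y\in\Sigma^*}p(xy)$, $\overrightarrow{p}(a\mid x)=\overrightarrow{p}(xa)/\overrightarrow{p}(x)$ for $a\in\Sigma$, $\overrightarrow{p}(\mathrm{eos}\mid x)=p(x)/\overrightarrow{p}(x)$. The eos-padded version $\bar Y$ of $Y\in\Sigma^*$ is $Y$ followed by infinitely many eos symbols; for a sequence $x\notin\Sigma^*$, $\overrightarrow{p}(a\mid x)=\mathbb{1}\{a=\mathrm{eos}\}$ (likewise for $q$). For a finite padded prefix, $\overrightarrow{p}(\bar y_{\le n})=\prod_{k=1}^n\overrightarrow{p}(\bar y_k\mid\bar y_{<k})$. Natural logarithm. *)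

theory Defs
  imports "HOL-Analysis.Analysis"
begin

text \<open>Alphabet: a finite type 'a. Strings: 'a list. The extended alphabet
  \<Sigma> \<union> {eos} is 'a option, with None = eos.\<close>

definition lang_model :: "('a::finite list \<Rightarrow> real) \<Rightarrow> bool" where
  "lang_model p \<longleftrightarrow> (\<forall>y. 0 \<le> p y) \<and> (p has_sum 1) UNIV"

definition prefix_prob :: "('a list \<Rightarrow> real) \<Rightarrow> 'a list \<Rightarrow> real" where
  "prefix_prob p x = (\<Sum>\<^sub>\<infinity>y\<in>UNIV. p (x @ y))"

definition cond_prob :: "('a list \<Rightarrow> real) \<Rightarrow> 'a option list \<Rightarrow> 'a option \<Rightarrow> real" where
  "cond_prob p xs a =
     (if None \<notin> set xs then
        (let x = map the xs in
          (case a of None \<Rightarrow> p x / prefix_prob p x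
                   | Some b \<Rightarrow> prefix_prob p (x @ [b]) / prefix_prob p x))
      else (if a = None then 1 else 0))"

text \<open>eos-padded version of Y, 1-indexed: ybar Y n for n \<ge> 1.\<close>
definition ybar :: "'a list \<Rightarrow> nat \<Rightarrow> 'a option" where
  "ybar Y n = (if 1 \<le> n \<and> n \<le> length Y then Some (Y ! (n - 1)) else None)"

definition ybar_lt :: "'a list \<Rightarrow> nat \<Rightarrow> 'a option list" where
  "ybar_lt Y n = map (ybar Y) [1..<n]"

definition padded_prefix_prob :: "('a list \<Rightarrow> real) \<Rightarrow> 'a list \<Rightarrow> nat \<Rightarrow> real" where
  "padded_prefix_prob p Y N = (\<Prod>k = 1..N. cond_prob p (ybar_lt Y k) (ybar Y k))"

text \<open>KL(p || q) = sum_y p(y) ln(p(y)/q(y)) < \<infinity> (with p ln(p/0) = \<infinity> for p > 0).\<close>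
definition kl_finite :: "('a list \<Rightarrow> real) \<Rightarrow> ('a list \<Rightarrow> real) \<Rightarrow> bool" where
  "kl_finite p q \<longleftrightarrow> (\<forall>y. 0 < p y \<longrightarrow> 0 < q y) \<and>
                      (\<lambda>y. p y * ln (p y / q y)) summable_on UNIV"

definition grad :: "('d::real_inner \<Rightarrow> real) \<Rightarrow> 'd \<Rightarrow> 'd" where
  "grad f x = (THE g. GDERIV f x :> g)"

definition mc_grad_trunc ::
  "('d::real_inner \<Rightarrow> 'a list \<Rightarrow> real) \<Rightarrow> ('a list \<Rightarrow> real) \<Rightarrow> 'd \<Rightarrow> nat \<Rightarrow> (nat \<Rightarrow> 'a list) \<Rightarrow> nat \<Rightarrow> 'd" where
  "mc_grad_trunc p q \<theta> M Y N =
     (\<Sum>n = 1..N. (1 / real M) *\<^sub>R (\<Sum>m = 1..M.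
        ln (cond_prob (p \<theta>) (ybar_lt (Y m) n) (ybar (Y m) n)
            / cond_prob q (ybar_lt (Y m) n) (ybar (Y m) n))
        *\<^sub>R grad (\<lambda>\<theta>'. ln (padded_prefix_prob (p \<theta>') (Y m) N)) \<theta>))"

definition mc_grad ::
  "('d::real_inner \<Rightarrow> 'a list \<Rightarrow> real) \<Rightarrow> ('a list \<Rightarrow> real) \<Rightarrow> 'd \<Rightarrow> nat \<Rightarrow> (nat \<Rightarrow> 'a list) \<Rightarrow> 'd" where
  "mc_grad p q \<theta> M Y =
     (1 / real M) *\<^sub>R (\<Sum>m = 1..M.
        ln (p \<theta> (Y m) / q (Y m)) *\<^sub>R grad (\<lambda>\<theta>'. ln (p \<theta>' (Y m))) \<theta>)"

end

theory Submission
  imports Defs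
begin

lemma lm_summable: "lang_model p \<Longrightarrow> p summable_on UNIV"
  unfolding lang_model_def by (auto simp: summable_on_def)

lemma ext_summable:
  assumes "lang_model p" shows "(\<lambda>y. p (x @ y)) summable_on A"
proof -
  have "p summable_on range (append x)"
    using summable_on_subset_banach[OF lm_summable[OF assms]] by blast
  then have "(p \<circ> append x) summable_on UNIV"
    by (subst (asm) summable_on_reindex) (auto simp: inj_def)
  then show ?thesis using summable_on_subset_banach by (force simp: o_def)
qed

lemma lm_nonneg: "lang_model p \<Longrightarrow> 0 \<le> p y"
  unfolding lang_model_def by auto

lemma pp_nonneg: "lang_model p \<Longrightarrow> 0 \<le> prefix_prob p x"
  unfolding prefix_prob_def by (rule infsum_nonneg) (simp add: lm_nonneg)

lemma pp_ge:
  assumes "lang_model p" shows "p (x @ y) \<le> prefix_prob p x"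
proof -
  have "infsum (\<lambda>y. p (x @ y)) {y} \<le> infsum (\<lambda>y. p (x @ y)) UNIV"
    by (rule infsum_mono_neutral) (auto simp: ext_summable[OF assms] lm_nonneg[OF assms])
  then show ?thesis by (simp add: prefix_prob_def)
qed

lemma pp_mono:
  assumes "lang_model p" shows "prefix_prob p (x @ [b]) \<le> prefix_prob p x"
proof -
  have "prefix_prob p (x @ [b]) = infsum ((\<lambda>z. p (x @ z)) \<circ> Cons b) UNIV"
    by (simp add: prefix_prob_def o_def)
  also have "\<dots> = infsum (\<lambda>z. p (x @ z)) (range (Cons b))"
    by (subst infsum_reindex) auto
  also have "\<dots> \<le> infsum (\<lambda>z. p (x @ z)) UNIV"
    by (rule infsum_mono_neutral) (auto simp: ext_summable[OF assms] lm_nonneg[OF assms])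
  finally show ?thesis by (simp add: prefix_prob_def)
qed

lemma pp_nil: "lang_model p \<Longrightarrow> prefix_prob p [] = 1"
  unfolding prefix_prob_def lang_model_def by (auto intro: infsumI)

lemma ybar_lt_le: "k \<le> Suc (length Y) \<Longrightarrow> ybar_lt Y k = map Some (take (k - 1) Y)"
proof (induction k)
  case 0 then show ?case by (simp add: ybar_lt_def)
next
  case (Suc k)
  show ?case
  proof (cases k)
    case 0 then show ?thesis by (simp add: ybar_lt_def)
  next
    case (Suc j)
    have "ybar_lt Y (Suc k) = ybar_lt Y k @ [ybar Y k]"
      using Suc by (simp add: ybar_lt_def)
    also have "\<dots> = map Some (take j Y) @ [Some (Y ! j)]"
      using Suc.IH Suc.prems Suc by (simp add: ybar_def)
    also have "\<dots> = map Some (take k Y)"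
      using Suc.prems Suc by (simp add: take_Suc_conv_app_nth)
    finally show ?thesis by simp
  qed
qed

lemma ybar_lt_gt: "k > Suc (length Y) \<Longrightarrow> None \<in> set (ybar_lt Y k)"
  unfolding ybar_lt_def ybar_def
  by (auto simp: image_iff intro!: bexI[of _ "Suc (length Y)"])

lemma cond_in:
  assumes "1 \<le> k" "k \<le> length Y"
  shows "cond_prob p (ybar_lt Y k) (ybar Y k) = prefix_prob p (take k Y) / prefix_prob p (take (k - 1) Y)"
proof -
  have "take (k - 1) Y @ [Y ! (k - 1)] = take k Y"
    using assms by (metis Suc_diff_1 diff_less less_le_trans zero_less_one take_Suc_conv_app_nth)
  then show ?thesis
    using assms by (simp add: cond_prob_def ybar_lt_le ybar_def o_def)
qed

lemma cond_end:
  "cond_prob p (ybar_lt Y (Suc (length Y))) (ybar Y (Suc (length Y))) = p Y / prefix_prob p Y"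
  by (simp add: cond_prob_def ybar_lt_le ybar_def o_def)

lemma cond_after:
  "k > Suc (length Y) \<Longrightarrow> cond_prob p (ybar_lt Y k) (ybar Y k) = 1"
  using ybar_lt_gt[of Y k] by (simp add: cond_prob_def ybar_def)

lemma prod_upto:
  assumes "lang_model p"
  shows "N \<le> length Y \<Longrightarrow> (\<Prod>k=1..N. cond_prob p (ybar_lt Y k) (ybar Y k)) = prefix_prob p (take N Y)"
proof (induction N)
  case 0 then show ?case by (simp add: pp_nil[OF assms])
next
  case (Suc N)
  have e: "take N Y @ [Y ! N] = take (Suc N) Y"
    using Suc.prems by (simp add: take_Suc_conv_app_nth)
  have le: "prefix_prob p (take (Suc N) Y) \<le> prefix_prob p (take N Y)"
    using pp_mono[OF assms, of "take N Y" "Y ! N"] e by simp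
  have nn: "0 \<le> prefix_prob p (take (Suc N) Y)" by (rule pp_nonneg[OF assms])
  have "(\<Prod>k=1..Suc N. cond_prob p (ybar_lt Y k) (ybar Y k))
      = prefix_prob p (take N Y) * (prefix_prob p (take (Suc N) Y) / prefix_prob p (take N Y))"
    using Suc by (simp add: prod.cl_ivl_Suc cond_in)
  also have "\<dots> = prefix_prob p (take (Suc N) Y)"
    using le nn by (cases "prefix_prob p (take N Y) = 0") auto
  finally show ?case .
qed

lemma prod_full:
  assumes "lang_model p"
  shows "N > length Y \<Longrightarrow> (\<Prod>k=1..N. cond_prob p (ybar_lt Y k) (ybar Y k)) = p Y"
proof (induction N)
  case 0 then show ?case by simp
next
  case (Suc N)
  show ?case
  proof (cases "N = length Y")
    case True
    have le: "p Y \<le> prefix_prob p Y" using pp_ge[OF assms, of Y "[]"] by simp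
    have nn: "0 \<le> p Y" by (rule lm_nonneg[OF assms])
    have "(\<Prod>k=1..Suc N. cond_prob p (ybar_lt Y k) (ybar Y k))
        = prefix_prob p Y * (p Y / prefix_prob p Y)"
      using True prod_upto[OF assms, of N Y] by (simp add: prod.cl_ivl_Suc cond_end)
    also have "\<dots> = p Y" using le nn by (cases "prefix_prob p Y = 0") auto
    finally show ?thesis .
  next
    case False
    then have "N > length Y" using Suc.prems by simp
    then show ?thesis using Suc.IH by (simp add: prod.cl_ivl_Suc cond_after)
  qed
qed

lemma cond_pos:
  assumes "lang_model p" "p Y > 0" "k \<ge> 1"
  shows "cond_prob p (ybar_lt Y k) (ybar Y k) > 0"
proof -
  have P: "prefix_prob p (take j Y) > 0" for j
    using pp_ge[OF assms(1), of "take j Y" "drop j Y"] assms(2) by simp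
  consider "k \<le> length Y" | "k = Suc (length Y)" | "k > Suc (length Y)" by linarith
  then show ?thesis
  proof cases
    case 1 then show ?thesis using assms(3) P by (simp add: cond_in)
  next
    case 2 then show ?thesis using P[of "length Y"] assms(2) by (simp add: cond_end)
  next
    case 3 then show ?thesis by (simp add: cond_after)
  qed
qed

lemma ln_sum:
  assumes p: "lang_model p" and q: "lang_model q" and pos: "p Y > 0" "q Y > 0"
    and N: "N > length Y"
  shows "(\<Sum>n=1..N. ln (cond_prob p (ybar_lt Y n) (ybar Y n) / cond_prob q (ybar_lt Y n) (ybar Y n)))
        = ln (p Y / q Y)"
proof -
  have "(\<Sum>n=1..N. ln (cond_prob p (ybar_lt Y n) (ybar Y n) / cond_prob q (ybar_lt Y n) (ybar Y n)))
      = (\<Sum>n=1..N. ln (cond_prob p (ybar_lt Y n) (ybar Y n))) - (\<Sum>n=1..N. ln (cond_prob q (ybar_lt Y n) (ybar Y n)))"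
    unfolding sum_subtractf[symmetric]
  proof (rule sum.cong)
    fix n assume "n \<in> {1..N}"
    then have "n \<ge> 1" by simp
    show "ln (cond_prob p (ybar_lt Y n) (ybar Y n) / cond_prob q (ybar_lt Y n) (ybar Y n))
      = ln (cond_prob p (ybar_lt Y n) (ybar Y n)) - ln (cond_prob q (ybar_lt Y n) (ybar Y n))"
      using cond_pos[OF p pos(1) \<open>n \<ge> 1\<close>] cond_pos[OF q pos(2) \<open>n \<ge> 1\<close>] by (simp add: ln_div)
  qed simp
  also have "\<dots> = ln (\<Prod>n=1..N. cond_prob p (ybar_lt Y n) (ybar Y n)) - ln (\<Prod>n=1..N. cond_prob q (ybar_lt Y n) (ybar Y n))"
  proof -
    have a: "cond_prob p (ybar_lt Y i) (ybar Y i) \<noteq> 0" "cond_prob q (ybar_lt Y i) (ybar Y i) \<noteq> 0"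
      if "i \<in> {1..N}" for i
      using cond_pos[OF p pos(1), of i] cond_pos[OF q pos(2), of i] that by auto
    show ?thesis by (subst (1 2) ln_prod) (use a in auto)
  qed
  also have "\<dots> = ln (p Y / q Y)"
    using prod_full[OF p N] prod_full[OF q N] pos by (simp add: ln_div)
  finally show ?thesis .
qed

theorem lemma3:
  fixes p :: "'d::euclidean_space \<Rightarrow> 'a::finite list \<Rightarrow> real"
    and q :: "'a list \<Rightarrow> real"
    and \<theta> :: 'd and M :: nat and Y :: "nat \<Rightarrow> 'a list"
  assumes lm_p: "\<And>\<theta>'. lang_model (p \<theta>')"
    and lm_q: "lang_model q"
    and diff: "\<And>y \<theta>'. (\<lambda>t. p t y) differentiable (at \<theta>')"
    and kl: "kl_finite (p \<theta>) q"
    and M: "M \<ge> 1"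
    and samples: "\<And>m. m \<in> {1..M} \<Longrightarrow> p \<theta> (Y m) > 0"
  shows "(\<lambda>N. mc_grad_trunc p q \<theta> M Y N) \<longlonglongrightarrow> mc_grad p q \<theta> M Y"
proof (rule tendsto_eventually)
  define L where "L = Max ((\<lambda>m. length (Y m)) ` {1..M})"
  have qpos: "q (Y m) > 0" if "m \<in> {1..M}" for m
    using kl samples[OF that] unfolding kl_finite_def by blast
  show "\<forall>\<^sub>F N in sequentially. mc_grad_trunc p q \<theta> M Y N = mc_grad p q \<theta> M Y"
    unfolding eventually_sequentially
  proof (intro exI allI impI)
    fix N assume N: "Suc L \<le> N"
    have NL: "N > length (Y m)" if "m \<in> {1..M}" for m
    proof -
      have "length (Y m) \<le> L" unfolding L_def using that by (intro Max_ge) auto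
      then show ?thesis using N by simp
    qed
    have g: "grad (\<lambda>\<theta>'. ln (padded_prefix_prob (p \<theta>') (Y m) N)) \<theta>
           = grad (\<lambda>\<theta>'. ln (p \<theta>' (Y m))) \<theta>" if "m \<in> {1..M}" for m
      unfolding padded_prefix_prob_def using prod_full[OF lm_p NL[OF that]] by simp
    have "mc_grad_trunc p q \<theta> M Y N = (1 / real M) *\<^sub>R (\<Sum>m = 1..M.
        (\<Sum>n = 1..N. ln (cond_prob (p \<theta>) (ybar_lt (Y m) n) (ybar (Y m) n)
            / cond_prob q (ybar_lt (Y m) n) (ybar (Y m) n)))
        *\<^sub>R grad (\<lambda>\<theta>'. ln (padded_prefix_prob (p \<theta>') (Y m) N)) \<theta>)"
      unfolding mc_grad_trunc_def scaleR_sum_right[symmetric] scaleR_sum_left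
      by (subst sum.swap) simp
    also have "\<dots> = mc_grad p q \<theta> M Y"
      unfolding mc_grad_def
    proof (intro arg_cong[where f="scaleR _"] sum.cong refl)
      fix m assume m: "m \<in> {1..M}"
      show "(\<Sum>n = 1..N. ln (cond_prob (p \<theta>) (ybar_lt (Y m) n) (ybar (Y m) n)
            / cond_prob q (ybar_lt (Y m) n) (ybar (Y m) n)))
        *\<^sub>R grad (\<lambda>\<theta>'. ln (padded_prefix_prob (p \<theta>') (Y m) N)) \<theta>
        = ln (p \<theta> (Y m) / q (Y m)) *\<^sub>R grad (\<lambda>\<theta>'. ln (p \<theta>' (Y m))) \<theta>"
        unfolding g[OF m] ln_sum[OF lm_p lm_q samples[OF m] qpos[OF m] NL[OF m]] ..
    qed
    finally show "mc_grad_trunc p q \<theta> M Y N = mc_grad p q \<theta> M Y" .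
  qed
qed

end
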